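(* Assume $abcd\neq0$ and $\omega\in\partial B$. Then $\displaystyle\lim_{M\to\infty}\frac{\mathcal{E}_M(\omega)}{M}=\frac23$.
   Context: Setting: $C=\begin{bmatrix} a&b\\ c&d\end{bmatrix}$ a fixed $2\times2$ unitary matrix, $\Delta=\det C$, a fixed square root $\Delta^{1/2}$; for each $M\ge1$, $\Gamma_M=\{0,\dots,M-1\}$ and $E_M$ is the linear map on $\ell^2(\Gamma_M;\mathbb{C}^2)$ with $(E_M\varphi)(x)=P\varphi(x+1)+Q\varphi(x-1)$, $\varphi(-1)=\varphi(M)=0$, $P=\begin{bmatrix} a&b\\0&0\end{bmatrix}$, $Q=\begin{bmatrix}0&0\\c&d\end{bmatrix}$. For $\omega$ on the unit circle let $z=\Delta^{1/2}\omega$ and let $\varphi$ be the unique solution of $(z-E_M)\varphi=\delta_0|R\rangle$, where $|R\rangle=(0,1)^\top$; the energy is $\mathcal{E}_M(\omega)=\sum_{n=0}^{M-1}\|\varphi(n)\|^2_{\mathbb{C}^2}$. Let $x(\omega)=\frac{\omega+\omega^{-1}}{2|a|}$ and $\partial B=\{\omega:|\omega|=1,\ |x(\omega)|=1\}$. *)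

theory Defs
  imports Complex_Main
begin

text \<open>C = [[a,b],[c,d]] is unitary: C^* C = I (entrywise).\<close>
definition unitary2 :: "complex \<Rightarrow> complex \<Rightarrow> complex \<Rightarrow> complex \<Rightarrow> bool" where
  "unitary2 a b c d \<longleftrightarrow>
     cnj a * a + cnj c * c = 1 \<and> cnj a * b + cnj c * d = 0 \<and>
     cnj b * a + cnj d * c = 0 \<and> cnj b * b + cnj d * d = 1"

text \<open>Vectors in l^2(Gamma_M; C^2) are represented as functions nat => complex x complex
  that vanish outside {0..<M}. (E_M phi)(x) = P phi(x+1) + Q phi(x-1), with phi(-1)=phi(M)=0.\<close>
definition Eop :: "complex \<Rightarrow> complex \<Rightarrow> complex \<Rightarrow> complex \<Rightarrow> nat
                    \<Rightarrow> (nat \<Rightarrow> complex \<times> complex) \<Rightarrow> nat \<Rightarrow> complex \<times> complex" where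
  "Eop a b c d M \<phi> x =
     (let nxt = (if x + 1 < M then \<phi> (x + 1) else (0, 0));
          prv = (if x = 0 then (0, 0) else \<phi> (x - 1))
      in (a * fst nxt + b * snd nxt, c * fst prv + d * snd prv))"

definition is_resolvent_sol :: "complex \<Rightarrow> complex \<Rightarrow> complex \<Rightarrow> complex \<Rightarrow> nat \<Rightarrow> complex
                                 \<Rightarrow> (nat \<Rightarrow> complex \<times> complex) \<Rightarrow> bool" where
  "is_resolvent_sol a b c d M z \<phi> \<longleftrightarrow>
     (\<forall>n\<ge>M. \<phi> n = (0, 0)) \<and>
     (\<forall>x<M. (z * fst (\<phi> x) - fst (Eop a b c d M \<phi> x),
              z * snd (\<phi> x) - snd (Eop a b c d M \<phi> x))
            = (if x = 0 then (0, 1) else (0, 0)))"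

definition energy :: "complex \<Rightarrow> complex \<Rightarrow> complex \<Rightarrow> complex \<Rightarrow> complex \<Rightarrow> nat \<Rightarrow> complex \<Rightarrow> real" where
  "energy a b c d sqrt\<Delta> M \<omega> =
     (let \<phi> = (THE \<phi>. is_resolvent_sol a b c d M (sqrt\<Delta> * \<omega>) \<phi>)
      in \<Sum>n<M. (cmod (fst (\<phi> n)))\<^sup>2 + (cmod (snd (\<phi> n)))\<^sup>2)"

definition xfun :: "complex \<Rightarrow> complex \<Rightarrow> complex" where
  "xfun a \<omega> = (\<omega> + inverse \<omega>) / (2 * complex_of_real (cmod a))"

definition boundaryB :: "complex \<Rightarrow> complex set" where
  "boundaryB a = {\<omega>. cmod \<omega> = 1 \<and> cmod (xfun a \<omega>) = 1}"

end

theory Submission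
  imports Defs "HOL-Real_Asymp.Real_Asymp"
begin
lemma lim23: fixes B::real assumes "B>0" shows "(\<lambda>M::nat. (real M + B*real M*(real M-1) + B*(real M-1)*real M*(2*real M-1)/3) / ((1+2*B*(real M-1)+B*(real M-1)^2)*real M)) \<longlonglongrightarrow> 2/3"
proof -
  have l1: "(\<lambda>M::nat. 1/real M^2) \<longlonglongrightarrow> 0" by real_asymp
  have l3: "(\<lambda>M::nat. (real M-1)*(2*real M-1)/real M^2) \<longlonglongrightarrow> 2" by real_asymp
  have l4: "(\<lambda>M::nat. (real M-1)/real M^2) \<longlonglongrightarrow> 0" by real_asymp
  have l5: "(\<lambda>M::nat. (real M-1)^2/real M^2) \<longlonglongrightarrow> 1" by real_asymp
  have N: "(\<lambda>M::nat. 1/real M^2 + B*((real M-1)/real M^2) + B*((real M-1)*(2*real M-1)/real M^2)/3) \<longlonglongrightarrow> 0 + B*0 + B*2/3"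
    by (intro tendsto_add tendsto_mult_left tendsto_divide l1 l3 l4 tendsto_const) auto
  have D: "(\<lambda>M::nat. 1/real M^2 + 2*B*((real M-1)/real M^2) + B*((real M-1)^2/real M^2)) \<longlonglongrightarrow> 0 + 2*B*0 + B*1"
    by (intro tendsto_add tendsto_mult_left l1 l4 l5)
  have "(\<lambda>M::nat. (1/real M^2 + B*((real M-1)/real M^2) + B*((real M-1)*(2*real M-1)/real M^2)/3) / (1/real M^2 + 2*B*((real M-1)/real M^2) + B*((real M-1)^2/real M^2))) \<longlonglongrightarrow> (0 + B*0 + B*2/3)/(0 + 2*B*0 + B*1)"
    using N D assms by (intro tendsto_divide) auto
  moreover have e: "(0 + B*0 + B*2/3)/(0 + 2*B*0 + B*1) = 2/3" using assms by simp
  ultimately have L: "(\<lambda>M::nat. (1/real M^2 + B*((real M-1)/real M^2) + B*((real M-1)*(2*real M-1)/real M^2)/3) / (1/real M^2 + 2*B*((real M-1)/real M^2) + B*((real M-1)^2/real M^2))) \<longlonglongrightarrow> 2/3" by (simp only: e)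
  show ?thesis
  proof (rule Lim_transform_eventually[OF L])
    show "\<forall>\<^sub>F M in sequentially. (1/real M^2 + B*((real M-1)/real M^2) + B*((real M-1)*(2*real M-1)/real M^2)/3) / (1/real M^2 + 2*B*((real M-1)/real M^2) + B*((real M-1)^2/real M^2)) = (real M + B*real M*(real M-1) + B*(real M-1)*real M*(2*real M-1)/3) / ((1+2*B*(real M-1)+B*(real M-1)^2)*real M)"
      using eventually_gt_at_top[of "0::nat"]
    proof eventually_elim
      case (elim M)
      then have m: "real M \<ge> 1" by simp
      have dp: "1+2*B*(real M-1)+B*(real M-1)^2 > 0" using m assms by (simp add: add_pos_nonneg)
      have dp2: "1/real M^2 + 2*B*((real M-1)/real M^2) + B*((real M-1)^2/real M^2) = (1+2*B*(real M-1)+B*(real M-1)^2)/real M^2"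
        by (simp add: add_divide_distrib)
      have np: "1/real M^2 + B*((real M-1)/real M^2) + B*((real M-1)*(2*real M-1)/real M^2)/3 = (real M + B*real M*(real M-1) + B*(real M-1)*real M*(2*real M-1)/3)/ real M^3"
        using m by (simp add: field_simps power2_eq_square power3_eq_cube)
      have gen: "\<And>X D::real. D \<noteq> 0 \<Longrightarrow> (X/real M^3)/(D/real M^2) = X/(D*real M)"
        using m by (simp add: field_simps power2_eq_square power3_eq_cube)
      show ?case unfolding dp2 np using dp by (subst gen) auto
    qed
  qed
qed
definition fam :: "complex \<Rightarrow> complex \<Rightarrow> complex \<Rightarrow> complex \<Rightarrow> complex \<Rightarrow> complex \<Rightarrow> nat \<Rightarrow> complex \<times> complex" where
  "fam q a b z \<sigma> \<tau> n = (q^n * (q*b*(\<sigma> - \<tau>*of_nat n)), q^n * (\<tau>*z + (z - q*a)*(\<sigma> - \<tau>*of_nat n)))"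

lemma fam_rec1: "z * fst (fam q a b z \<sigma> \<tau> n) = a * fst (fam q a b z \<sigma> \<tau> (Suc n)) + b * snd (fam q a b z \<sigma> \<tau> (Suc n))"
  unfolding fam_def by (simp add: algebra_simps)

lemma fam_aux:
  fixes a b c d q z P w \<tau> :: complex
  assumes "d = q^2*a" "z^2 - 2*q*a*z + (a*d-b*c) = 0"
  shows "z*(q*P)*(\<tau>*z + (z-q*a)*(w-\<tau>)) = c*(P*(q*b*w)) + d*(P*(\<tau>*z+(z-q*a)*w))"
  using assms by algebra

lemma fam_rec2:
  assumes "d = q^2*a" "z^2 - 2*q*a*z + (a*d-b*c) = 0"
  shows "z * snd (fam q a b z \<sigma> \<tau> (Suc n)) = c * fst (fam q a b z \<sigma> \<tau> n) + d * snd (fam q a b z \<sigma> \<tau> n)"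
proof -
  have e: "\<sigma> - \<tau> * of_nat (Suc n) = (\<sigma> - \<tau>*of_nat n) - \<tau>" by (simp add: algebra_simps)
  show ?thesis unfolding fam_def fst_conv snd_conv e power_Suc
    using fam_aux[OF assms, where P="q^n" and w="\<sigma> - \<tau>*of_nat n" and \<tau>=\<tau>] by (simp add: mult.assoc)
qed

lemma fwd_unique:
  fixes f h :: "nat \<Rightarrow> complex \<times> complex"
  assumes a: "a \<noteq> 0" and z: "z \<noteq> 0"
    and rf: "\<And>x. Suc x < M \<Longrightarrow> z*fst(f x) = a*fst(f(Suc x)) + b*snd(f(Suc x)) \<and> z*snd(f(Suc x)) = c*fst(f x) + d*snd(f x)"
    and rh: "\<And>x. Suc x < M \<Longrightarrow> z*fst(h x) = a*fst(h(Suc x)) + b*snd(h(Suc x)) \<and> z*snd(h(Suc x)) = c*fst(h x) + d*snd(h x)"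
    and h0: "f 0 = h 0"
  shows "n < M \<Longrightarrow> f n = h n"
proof (induction n)
  case 0 then show ?case using h0 by simp
next
  case (Suc n)
  then have ih: "f n = h n" by simp
  from rf[OF Suc.prems] rh[OF Suc.prems] ih
  have s: "snd (f (Suc n)) = snd (h (Suc n))" using z
    by (metis mult_cancel_left)
  from rf[OF Suc.prems] rh[OF Suc.prems] ih s
  have "a*fst(f(Suc n)) = a*fst(h(Suc n))" by (metis add_right_cancel)
  then have "fst (f (Suc n)) = fst (h (Suc n))" using a by simp
  with s show ?case by (simp add: prod_eq_iff)
qed

lemma sol_rec:
  assumes "is_resolvent_sol a b c d M z \<psi>" "Suc x < M"
  shows "z*fst(\<psi> x) = a*fst(\<psi>(Suc x)) + b*snd(\<psi>(Suc x)) \<and> z*snd(\<psi>(Suc x)) = c*fst(\<psi> x) + d*snd(\<psi> x)"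
proof -
  have A: "\<And>y. y < M \<Longrightarrow> (z * fst (\<psi> y) - fst (Eop a b c d M \<psi> y),
              z * snd (\<psi> y) - snd (Eop a b c d M \<psi> y)) = (if y = 0 then (0, 1) else (0, 0))"
    using assms(1) unfolding is_resolvent_sol_def by blast
  from A[of x] assms(2) have 1: "z * fst (\<psi> x) - (a*fst(\<psi>(Suc x)) + b*snd(\<psi>(Suc x))) = 0"
    by (auto simp: Eop_def Let_def split: if_splits)
  from A[of "Suc x"] assms(2) have 2: "z * snd (\<psi> (Suc x)) - (c*fst(\<psi> x) + d*snd(\<psi> x)) = 0"
    by (auto simp: Eop_def Let_def split: if_splits)
  from 1 2 show ?thesis by simp
qed

lemma sol_0:
  assumes "is_resolvent_sol a b c d M z \<psi>" "0 < M"
  shows "z*snd(\<psi> 0) = 1"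
proof -
  from assms have "(z * fst (\<psi> 0) - fst (Eop a b c d M \<psi> 0),
              z * snd (\<psi> 0) - snd (Eop a b c d M \<psi> 0)) = (0, 1)"
    unfolding is_resolvent_sol_def by auto
  then show ?thesis by (simp add: Eop_def Let_def)
qed

lemma sol_last:
  assumes "is_resolvent_sol a b c d M z \<psi>" "0 < M"
  shows "z*fst(\<psi> (M-1)) = 0"
proof -
  from assms have "fst (z * fst (\<psi> (M-1)) - fst (Eop a b c d M \<psi> (M-1)),
              z * snd (\<psi> (M-1)) - snd (Eop a b c d M \<psi> (M-1))) = fst (if M-1 = 0 then (0::complex, 1::complex) else (0, 0))"
    unfolding is_resolvent_sol_def by auto
  then show ?thesis using assms(2) by (simp add: Eop_def Let_def split: if_splits)
qed

lemma norm_aff: "(cmod (z + g * complex_of_real m))^2 = (cmod z)^2 + 2*m*Re(cnj z * g) + m^2*(cmod g)^2"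
  unfolding cmod_power2 by (simp add: algebra_simps power2_eq_square)

lemma sum_h: "(\<Sum>m<M. 1 + 2*B*real m + 2*B*(real m)^2) = real M + B*real M*(real M-1) + B*(real M-1)*real M*(2*real M-1)/3"
  by (induction M) (simp_all add: field_simps power2_eq_square)

lemma energy_closed:
  fixes a b c d q z s \<omega> :: complex and B :: real
  assumes a: "a \<noteq> 0" and b: "b \<noteq> 0" and zs: "z = s*\<omega>"
    and C1: "d = q^2*a" and C2: "z^2 - 2*q*a*z + (a*d-b*c) = 0"
    and q1: "cmod q = 1" and z1: "cmod z = 1" and Bdef: "B = (cmod b)^2"
    and Re1: "Re (cnj z * (z - q*a)) = B" and g1: "(cmod (z - q*a))^2 = B"
    and M: "M > 0"
  shows "energy a b c d s M \<omega> = (real M + B*real M*(real M-1) + B*(real M-1)*real M*(2*real M-1)/3) / (1 + 2*B*(real M - 1) + B*(real M-1)^2)"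
proof -
  define K where "K = M - 1"
  define g where "g = z - q*a"
  define Dc where "Dc = z + g * of_nat K"
  have z0: "z \<noteq> 0" using z1 by auto
  have q0: "q \<noteq> 0" using q1 by auto
  have Bpos: "B > 0" using b Bdef by simp
  have KM: "real K = real M - 1" using M unfolding K_def by (simp add: of_nat_diff)
  have Dn: "(cmod Dc)^2 = 1 + 2*B*real K + B*(real K)^2"
  proof -
    have DD: "Dc = z + g * complex_of_real (real K)" by (simp add: Dc_def)
    have "(cmod Dc)^2 = (cmod z)^2 + 2*real K*Re(cnj z * g) + (real K)^2*(cmod g)^2"
      unfolding DD by (rule norm_aff)
    then show ?thesis using z1 Re1 g1 unfolding g_def by simp
  qed
  have Dpos: "1 + 2*B*real K + B*(real K)^2 > 0" using Bpos by (simp add: add_pos_nonneg)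
  then have Dc0: "Dc \<noteq> 0" using Dn by auto
  define \<kappa> where "\<kappa> = 1/(z*Dc)"
  define \<phi> where "\<phi> = (\<lambda>n. if n < M then fam q a b z (\<kappa> * of_nat K) \<kappa> n else (0,0))"
  have sol: "is_resolvent_sol a b c d M z \<phi>"
    unfolding is_resolvent_sol_def
  proof (intro conjI allI impI)
    fix n assume "M \<le> n" then show "\<phi> n = (0,0)" unfolding \<phi>_def by simp
  next
    fix x assume x: "x < M"
    have c1: "z * fst (\<phi> x) - fst (Eop a b c d M \<phi> x) = 0"
    proof (cases "x + 1 < M")
      case True
      then show ?thesis using fam_rec1[of z q a b "\<kappa> * of_nat K" \<kappa> x] x
        unfolding \<phi>_def Eop_def Let_def by simp
    next
      case False
      then have "x = K" using x unfolding K_def by simp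
      then show ?thesis using False x unfolding \<phi>_def Eop_def Let_def fam_def by simp
    qed
    have c2: "z * snd (\<phi> x) - snd (Eop a b c d M \<phi> x) = (if x = 0 then 1 else 0)"
    proof (cases x)
      case 0
      have "z * (\<kappa> * z + g * (\<kappa> * of_nat K)) = z * \<kappa> * Dc"
        unfolding Dc_def by (simp add: algebra_simps)
      also have "\<dots> = 1" unfolding \<kappa>_def using z0 Dc0 by simp
      finally have "z * (\<kappa> * z + g * (\<kappa> * of_nat K)) = 1" .
      then show ?thesis using 0 x unfolding \<phi>_def Eop_def Let_def fam_def g_def by simp
    next
      case (Suc y)
      then show ?thesis using fam_rec2[OF C1 C2, of "\<kappa> * of_nat K" \<kappa> y] x
        unfolding \<phi>_def Eop_def Let_def by simp
    qed
    show "(z * fst (\<phi> x) - fst (Eop a b c d M \<phi> x), z * snd (\<phi> x) - snd (Eop a b c d M \<phi> x)) =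
          (if x = 0 then (0, 1) else (0, 0))" using c1 c2 by simp
  qed
  have uniq: "\<psi> = \<phi>" if psol: "is_resolvent_sol a b c d M z \<psi>" for \<psi>
  proof -
    define \<sigma> where "\<sigma> = fst (\<psi> 0) / (q*b)"
    define \<tau> where "\<tau> = (1/z - g*\<sigma>)/z"
    have s0: "snd (\<psi> 0) = 1/z" using sol_0[OF psol M] z0 by (simp add: field_simps)
    have F0: "\<psi> 0 = fam q a b z \<sigma> \<tau> 0"
      using s0 q0 b z0 unfolding fam_def \<sigma>_def \<tau>_def g_def by (simp add: prod_eq_iff field_simps)
    have eqF: "\<psi> n = fam q a b z \<sigma> \<tau> n" if "n < M" for n
    proof (rule fwd_unique[where a=a and z=z and b=b and c=c and d=d and M=M and f=\<psi> and h="fam q a b z \<sigma> \<tau>"])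
      show "\<And>x. Suc x < M \<Longrightarrow> z * fst (\<psi> x) = a * fst (\<psi> (Suc x)) + b * snd (\<psi> (Suc x)) \<and>
        z * snd (\<psi> (Suc x)) = c * fst (\<psi> x) + d * snd (\<psi> x)" by (rule sol_rec[OF psol])
      show "\<And>x. Suc x < M \<Longrightarrow> z * fst (fam q a b z \<sigma> \<tau> x) = a * fst (fam q a b z \<sigma> \<tau> (Suc x)) + b * snd (fam q a b z \<sigma> \<tau> (Suc x)) \<and>
        z * snd (fam q a b z \<sigma> \<tau> (Suc x)) = c * fst (fam q a b z \<sigma> \<tau> x) + d * snd (fam q a b z \<sigma> \<tau> x)"
        using fam_rec1 fam_rec2[OF C1 C2] by blast
    qed (use a z0 F0 that in auto)
    have "z * fst (\<psi> K) = 0" using sol_last[OF psol M] unfolding K_def .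
    then have "fst (fam q a b z \<sigma> \<tau> K) = 0" using eqF[of K] z0 M unfolding K_def by simp
    then have st: "\<sigma> = \<tau> * of_nat K" using q0 b unfolding fam_def by simp
    have "\<tau> * z + g * \<sigma> = 1/z" using z0 unfolding \<tau>_def by (simp add: field_simps)
    then have "\<tau> * Dc = 1/z" unfolding st Dc_def by (simp add: algebra_simps)
    then have tk: "\<tau> = \<kappa>" unfolding \<kappa>_def using Dc0 z0 by (simp add: field_simps)
    show "\<psi> = \<phi>"
    proof
      fix n show "\<psi> n = \<phi> n"
      proof (cases "n < M")
        case True then show ?thesis using eqF[OF True] st tk unfolding \<phi>_def by simp
      next
        case False then show ?thesis using psol unfolding \<phi>_def is_resolvent_sol_def by simp
      qed
    qed
  qed
  have THE: "(THE \<phi>. is_resolvent_sol a b c d M (s*\<omega>) \<phi>) = \<phi>"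
    unfolding zs[symmetric] using sol uniq by (rule the_equality)
  define h where "h = (\<lambda>m::real. 1 + 2*B*m + 2*B*m^2)"
  have k2: "(cmod \<kappa>)^2 = 1/(1 + 2*B*real K + B*(real K)^2)"
    unfolding \<kappa>_def Dn[symmetric] using z1 by (simp add: norm_divide norm_mult power_one_over)
  have trm: "(cmod (fst (\<phi> n)))^2 + (cmod (snd (\<phi> n)))^2 = h (real (K - n)) / (1 + 2*B*real K + B*(real K)^2)"
    if n: "n < M" for n
  proof -
    have nK: "n \<le> K" using n unfolding K_def by simp
    have e: "\<kappa> * of_nat K - \<kappa> * of_nat n = \<kappa> * complex_of_real (real (K - n))"
      using nK by (simp add: of_nat_diff algebra_simps)
    have f: "fst (\<phi> n) = q^n*q*b*\<kappa> * complex_of_real (real (K - n))"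
      using n unfolding \<phi>_def fam_def e by (simp add: algebra_simps)
    have s: "snd (\<phi> n) = q^n*\<kappa>*(z + g * complex_of_real (real (K - n)))"
      using n unfolding \<phi>_def fam_def e g_def by (simp add: algebra_simps)
    have f2: "(cmod (fst (\<phi> n)))^2 = (cmod \<kappa>)^2 * (B * (real (K-n))^2)"
      unfolding f Bdef using q1 by (simp add: norm_mult norm_power power_mult_distrib)
    have s2: "(cmod (snd (\<phi> n)))^2 = (cmod \<kappa>)^2 * (1 + 2*real (K-n)*B + (real (K-n))^2 * B)"
      unfolding s using q1 norm_aff[of z g "real (K-n)"] z1 Re1 g1 unfolding g_def
      by (simp add: norm_mult norm_power power_mult_distrib)
    have gen: "\<And>D x y::real. (1/D)*x + (1/D)*y = (x+y)/D" by (simp add: add_divide_distrib)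
    have num: "B * (real (K-n))^2 + (1 + 2*real (K-n)*B + (real (K-n))^2 * B) = h (real (K-n))"
      unfolding h_def by (simp add: algebra_simps)
    show ?thesis unfolding f2 s2 k2 gen num ..
  qed
  have "energy a b c d s M \<omega> = (\<Sum>n<M. (cmod (fst (\<phi> n)))^2 + (cmod (snd (\<phi> n)))^2)"
    unfolding energy_def THE Let_def by simp
  also have "\<dots> = (\<Sum>n<M. h (real (M - Suc n))) / (1 + 2*B*real K + B*(real K)^2)"
    by (simp add: trm K_def sum_divide_distrib)
  also have "(\<Sum>n<M. h (real (M - Suc n))) = (\<Sum>n<M. h (real n))"
    by (rule sum.nat_diff_reindex)
  also have "\<dots> = real M + B*real M*(real M-1) + B*(real M-1)*real M*(2*real M-1)/3"
    unfolding h_def by (rule sum_h)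
  finally show ?thesis unfolding KM .
qed
lemma main_facts:
  fixes a b c d s \<omega> :: complex
  assumes U: "unitary2 a b c d"
    and S: "s\<^sup>2 = a * d - b * c"
    and N: "a * b * c * d \<noteq> 0"
    and W: "\<omega> \<in> boundaryB a"
  shows "\<exists>q. d = q^2*a \<and> (s*\<omega>)^2 - 2*q*a*(s*\<omega>) + (a*d-b*c) = 0 \<and> cmod q = 1 \<and> cmod (s*\<omega>) = 1
     \<and> Re (cnj (s*\<omega>) * (s*\<omega> - q*a)) = (cmod b)^2 \<and> (cmod (s*\<omega> - q*a))^2 = (cmod b)^2"
proof -
  define \<Delta> where "\<Delta> = a*d - b*c"
  have a0: "a \<noteq> 0" and b0: "b \<noteq> 0" and c0: "c \<noteq> 0" and d0: "d \<noteq> 0" using N by auto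
  have u1: "cnj a * a + cnj c * c = 1" and u2: "cnj a * b + cnj c * d = 0"
    and u4: "cnj b * b + cnj d * d = 1" using U unfolding unitary2_def by auto
  have dD: "d = \<Delta> * cnj a" unfolding \<Delta>_def using u1 u2 by algebra
  have nsq: "\<And>w::complex. cnj w * w = complex_of_real ((cmod w)^2)"
    by (metis complex_norm_square mult.commute)
  have AC: "(cmod a)^2 + (cmod c)^2 = 1" using u1 unfolding nsq
    by (metis of_real_1 of_real_add of_real_eq_iff)
  have BD: "(cmod b)^2 + (cmod d)^2 = 1" using u4 unfolding nsq
    by (metis of_real_1 of_real_add of_real_eq_iff)
  have "cnj a * b = - (cnj c * d)" using u2 by (simp add: eq_neg_iff_add_eq_0)
  then have "cmod (cnj a * b) = cmod (cnj c * d)" by (metis norm_minus_cancel)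
  then have "cmod a * cmod b = cmod c * cmod d" by (simp add: norm_mult)
  then have ABCD: "(cmod a)^2 * (cmod b)^2 = (cmod c)^2 * (cmod d)^2" by (metis power_mult_distrib)
  have AD: "(cmod a)^2 = (cmod d)^2"
  proof -
    have "(cmod a)^2 = (cmod a)^2 * ((cmod b)^2 + (cmod d)^2)" using BD by simp
    also have "\<dots> = (cmod d)^2 * ((cmod a)^2 + (cmod c)^2)" using ABCD by (simp add: algebra_simps)
    finally show ?thesis using AC by simp
  qed
  have Bv: "(cmod b)^2 = 1 - (cmod a)^2" using BD AD by simp
  have "cmod d = cmod a" using AD by (simp add: power2_eq_iff_nonneg)
  moreover have "cmod d = cmod \<Delta> * cmod a" using dD by (simp add: norm_mult)
  ultimately have D1: "cmod \<Delta> = 1" using a0 by simp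
  have "(cmod s)^2 = 1" using S D1 unfolding \<Delta>_def by (metis norm_power)
  then have s1: "cmod s = 1" using norm_ge_zero[of s] by (auto simp: power2_eq_1_iff)
  have ss: "cnj s * s = 1" using s1 nsq[of s] by simp
  from W have w1: "cmod \<omega> = 1" and wx: "cmod (xfun a \<omega>) = 1" unfolding boundaryB_def by auto
  have ww: "cnj \<omega> * \<omega> = 1" using w1 nsq[of \<omega>] by simp
  then have winv: "inverse \<omega> = cnj \<omega>" by (metis inverse_unique mult.commute)
  define r where "r = Re \<omega>"
  have wsum: "\<omega> + cnj \<omega> = complex_of_real (2*r)" unfolding r_def by (rule complex_add_cnj)
  have "xfun a \<omega> = complex_of_real (r / cmod a)"
    unfolding xfun_def winv wsum by simp
  then have "cmod (complex_of_real (r / cmod a)) = 1" using wx by simp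
  then have "\<bar>r\<bar> / cmod a = 1" by (simp only: norm_of_real abs_divide abs_norm_cancel)
  then have ra: "\<bar>r\<bar> = cmod a" using a0 by (simp add: field_simps)
  then have r2: "r^2 = (cmod a)^2" by (metis power2_abs)
  define q where "q = s * complex_of_real r / a"
  have qa: "q * a = s * complex_of_real r" unfolding q_def using a0 by simp
  have r0: "r \<noteq> 0" using ra a0 by auto
  have q1: "cmod q = 1" unfolding q_def using s1 ra[symmetric] a0 r0 by (simp add: norm_mult norm_divide)
  have aa: "a * cnj a = complex_of_real ((cmod a)^2)" using nsq[of a] by (simp add: mult.commute)
  have C1: "d = q^2*a"
  proof -
    have "q^2*a = s^2 * complex_of_real (r^2) / a" unfolding q_def using a0 by (simp add: power2_eq_square field_simps)
    also have "\<dots> = \<Delta> * (a * cnj a) / a" unfolding r2 aa[symmetric] S \<Delta>_def ..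
    also have "\<dots> = d" using dD a0 by simp
    finally show ?thesis by simp
  qed
  have C2: "(s*\<omega>)^2 - 2*q*a*(s*\<omega>) + (a*d-b*c) = 0"
  proof -
    have "2*q*a*(s*\<omega>) = s*\<omega>*s*complex_of_real (2*r)" using qa by (simp add: algebra_simps)
    then show ?thesis using S wsum ww by algebra
  qed
  have z1: "cmod (s*\<omega>) = 1" using s1 w1 by (simp add: norm_mult)
  have "cnj (s*\<omega>) * (s*\<omega> - q*a) = (cnj s * s) * (cnj \<omega> * \<omega>) - (cnj s * s) * complex_of_real r * cnj \<omega>"
    unfolding qa by (simp add: algebra_simps)
  also have "\<dots> = 1 - complex_of_real r * cnj \<omega>" using ss ww by simp
  finally have "Re (cnj (s*\<omega>) * (s*\<omega> - q*a)) = 1 - r*r" unfolding r_def by simp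
  then have R: "Re (cnj (s*\<omega>) * (s*\<omega> - q*a)) = (cmod b)^2" using r2 Bv by (simp add: power2_eq_square)
  have "s*\<omega> - q*a = s * (\<omega> - complex_of_real r)" unfolding qa by (simp add: algebra_simps)
  then have "cmod (s*\<omega> - q*a) = cmod (\<omega> - complex_of_real r)" using s1 by (simp add: norm_mult)
  moreover have "(cmod (\<omega> - complex_of_real r))^2 = (Im \<omega>)^2" unfolding cmod_power2 r_def by simp
  moreover have "(Re \<omega>)^2 + (Im \<omega>)^2 = 1" using w1 unfolding cmod_power2[symmetric] by simp
  ultimately have G: "(cmod (s*\<omega> - q*a))^2 = (cmod b)^2" using r2 Bv unfolding r_def by simp
  show ?thesis using C1 C2 q1 z1 R G by blast
qed
theorem mainTheorem8:
  fixes a b c d sqrt\<Delta> \<omega> :: complex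
  assumes "unitary2 a b c d"
    and "sqrt\<Delta>\<^sup>2 = a * d - b * c"
    and "a * b * c * d \<noteq> 0"
    and "\<omega> \<in> boundaryB a"
  shows "(\<lambda>M. energy a b c d sqrt\<Delta> M \<omega> / real M) \<longlonglongrightarrow> 2 / 3"
proof -
  obtain q where C1: "d = q^2*a" and C2: "(sqrt\<Delta>*\<omega>)^2 - 2*q*a*(sqrt\<Delta>*\<omega>) + (a*d-b*c) = 0"
    and q1: "cmod q = 1" and z1: "cmod (sqrt\<Delta>*\<omega>) = 1"
    and R: "Re (cnj (sqrt\<Delta>*\<omega>) * (sqrt\<Delta>*\<omega> - q*a)) = (cmod b)^2"
    and G: "(cmod (sqrt\<Delta>*\<omega> - q*a))^2 = (cmod b)^2"
    using main_facts[OF assms] by blast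
  define B where "B = (cmod b)^2"
  have a0: "a \<noteq> 0" and b0: "b \<noteq> 0" using assms(3) by auto
  have Bpos: "B > 0" using b0 unfolding B_def by simp
  have E: "energy a b c d sqrt\<Delta> M \<omega> = (real M + B*real M*(real M-1) + B*(real M-1)*real M*(2*real M-1)/3) / (1 + 2*B*(real M - 1) + B*(real M-1)^2)"
    if "M > 0" for M
    by (rule energy_closed[OF a0 b0 refl C1 C2 q1 z1 B_def R[folded B_def] G[folded B_def] that])
  show ?thesis
  proof (rule Lim_transform_eventually[OF lim23[OF Bpos]])
    show "\<forall>\<^sub>F M in sequentially. (real M + B*real M*(real M-1) + B*(real M-1)*real M*(2*real M-1)/3) / ((1+2*B*(real M-1)+B*(real M-1)^2)*real M) = energy a b c d sqrt\<Delta> M \<omega> / real M"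
      using eventually_gt_at_top[of "0::nat"]
    proof eventually_elim
      case (elim M)
      show ?case unfolding E[OF elim] by simp
    qed
  qed
qed

end
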